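(* Let $f:G\to H$ be a surjective group homomorphism, and let $q_f:G\to G/\mathrm{Ker}(f)$ be the quotient map $g\mapsto g\,\mathrm{Ker}(f)$. (1) $\mathrm{sec}(f)\geq \sigma(f)$, and equality holds whenever $f$ does not admit a global section. (2) $\mathrm{sec}(f)=\mathrm{sec}(q_f)$. (3) If $f$ does not admit a global section, then $\mathrm{sec}(f)=\sigma(q_f)$.
   Context: For a homomorphism $f:G\to H$ and a subgroup $L\le H$, a local section of $f$ on $L$ is a homomorphism $s:L\to G$ with $f\circ s=\mathrm{incl}_L$ (the inclusion $L\hookrightarrow H$); a global section is a local section on $L=H$. The sectional number $\mathrm{sec}(f)$ is the least positive integer $m$ such that there exist proper subgroups $H_1,\ldots,H_m$ of $H$ with $H=H_1\cup\cdots\cup H_m$ and such that $f$ admits a local section on each $H_i$; $\mathrm{sec}(f)=\infty$ if no such $m$ exists. The covering number $\sigma(f)$ of a homomorphism $f:G\to H$ is the least positive integer $m$ such that there exist proper subgroups $G_1,\ldots,G_m$ of $G$ with $G=G_1\cup\cdots\cup G_m$ and, for each $i$, $\mathrm{Ker}(f)\subsetneq G_i$ and there is an isomorphism $\Omega_i:\mathrm{Ker}(f)\rtimes f(G_i)\to G_i$ (from some external semidirect product of $\mathrm{Ker}(f)$ by $f(G_i)$, with underlying set $\mathrm{Ker}(f)\times f(G_i)$) such that $f\circ\Omega_i=\pi_2$, the projection to the second coordinate; $\sigma(f)=\infty$ if no such $m$ exists. *)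

theory Defs
  imports "HOL-Algebra.Algebra" "HOL-Library.Extended_Nat"
begin

definition local_section ::
  "('a, 'c) monoid_scheme \<Rightarrow> ('b, 'd) monoid_scheme \<Rightarrow> ('a \<Rightarrow> 'b) \<Rightarrow> 'b set \<Rightarrow> ('b \<Rightarrow> 'a) \<Rightarrow> bool"
  where "local_section G H f L s \<longleftrightarrow>
           s \<in> hom (H\<lparr>carrier := L\<rparr>) G \<and> (\<forall>x\<in>L. f (s x) = x)"

definition has_local_section ::
  "('a, 'c) monoid_scheme \<Rightarrow> ('b, 'd) monoid_scheme \<Rightarrow> ('a \<Rightarrow> 'b) \<Rightarrow> 'b set \<Rightarrow> bool"
  where "has_local_section G H f L \<longleftrightarrow> (\<exists>s. local_section G H f L s)"

definition has_global_section ::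
  "('a, 'c) monoid_scheme \<Rightarrow> ('b, 'd) monoid_scheme \<Rightarrow> ('a \<Rightarrow> 'b) \<Rightarrow> bool"
  where "has_global_section G H f \<longleftrightarrow> has_local_section G H f (carrier H)"

definition proper_subgroup :: "'a set \<Rightarrow> ('a, 'c) monoid_scheme \<Rightarrow> bool"
  where "proper_subgroup L G \<longleftrightarrow> subgroup L G \<and> L \<noteq> carrier G"

text \<open>Sectional number; Inf of the empty set of enat is \<infinity>.\<close>
definition sec ::
  "('a, 'c) monoid_scheme \<Rightarrow> ('b, 'd) monoid_scheme \<Rightarrow> ('a \<Rightarrow> 'b) \<Rightarrow> enat"
  where "sec G H f = Inf {enat m | m. m > 0 \<and>
           (\<exists>Hs :: nat \<Rightarrow> 'b set.
              (\<forall>i<m. proper_subgroup (Hs i) H \<and> has_local_section G H f (Hs i)) \<and>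
              carrier H = (\<Union>i<m. Hs i))}"

definition semidirect_prod ::
  "('a, 'c) monoid_scheme \<Rightarrow> ('b, 'd) monoid_scheme \<Rightarrow> ('b \<Rightarrow> 'a \<Rightarrow> 'a) \<Rightarrow> ('a \<times> 'b) monoid"
  where "semidirect_prod K Q \<phi> =
    \<lparr>partial_object.carrier = carrier K \<times> carrier Q,
     monoid.mult = (\<lambda>(k1, q1) (k2, q2). (k1 \<otimes>\<^bsub>K\<^esub> \<phi> q1 k2, q1 \<otimes>\<^bsub>Q\<^esub> q2)),
     monoid.one = (\<one>\<^bsub>K\<^esub>, \<one>\<^bsub>Q\<^esub>)\<rparr>"

definition cov_number ::
  "('a, 'c) monoid_scheme \<Rightarrow> ('b, 'd) monoid_scheme \<Rightarrow> ('a \<Rightarrow> 'b) \<Rightarrow> enat"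
  where "cov_number G H f = Inf {enat m | m. m > 0 \<and>
           (\<exists>Gs :: nat \<Rightarrow> 'a set.
              (\<forall>i<m. proper_subgroup (Gs i) G \<and> kernel G H f \<subset> Gs i \<and>
                 (\<exists>\<phi> \<Omega>. \<phi> \<in> hom (H\<lparr>carrier := f ` Gs i\<rparr>) (AutoGroup (G\<lparr>carrier := kernel G H f\<rparr>)) \<and>
                    \<Omega> \<in> iso (semidirect_prod (G\<lparr>carrier := kernel G H f\<rparr>) (H\<lparr>carrier := f ` Gs i\<rparr>) \<phi>)
                            (G\<lparr>carrier := Gs i\<rparr>) \<and>
                    (\<forall>p \<in> kernel G H f \<times> f ` Gs i. f (\<Omega> p) = snd p))) \<and>
              carrier G = (\<Union>i<m. Gs i))}"

end

theory Submission
  imports Defs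
begin


lemma (in group) cancel_aux1 [simp]: "x \<in> carrier G \<Longrightarrow> y \<in> carrier G \<Longrightarrow> inv x \<otimes> (x \<otimes> y) = y"
  by (simp add: m_assoc[symmetric])
lemma (in group) cancel_aux2 [simp]: "x \<in> carrier G \<Longrightarrow> y \<in> carrier G \<Longrightarrow> x \<otimes> (inv x \<otimes> y) = y"
  by (simp add: m_assoc[symmetric])

lemma piece_to_cov:
  assumes G: "group G" and H: "group H" and f: "f \<in> hom G H" and surj: "f ` carrier G = carrier H"
    and ps: "proper_subgroup L H" and nt: "L \<noteq> {\<one>\<^bsub>H\<^esub>}" and ls: "local_section G H f L s"
    and Gi: "Gi = {g \<in> carrier G. f g \<in> L}"
  shows "proper_subgroup Gi G \<and> kernel G H f \<subset> Gi \<and>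
                 (\<exists>\<phi> \<Omega>. \<phi> \<in> hom (H\<lparr>carrier := f ` Gi\<rparr>) (AutoGroup (G\<lparr>carrier := kernel G H f\<rparr>)) \<and>
                    \<Omega> \<in> iso (semidirect_prod (G\<lparr>carrier := kernel G H f\<rparr>) (H\<lparr>carrier := f ` Gi\<rparr>) \<phi>)
                            (G\<lparr>carrier := Gi\<rparr>) \<and>
                    (\<forall>p \<in> kernel G H f \<times> f ` Gi. f (\<Omega> p) = snd p))"
proof -
  interpret G: group G by (rule G)
  interpret H: group H by (rule H)
  interpret fh: group_hom G H f using f G H by (simp add: group_hom_def group_hom_axioms_def)
  let ?K = "kernel G H f"
  have sgL: "subgroup L H" using ps by (simp add: proper_subgroup_def)
  have Lc: "L \<subseteq> carrier H" using sgL subgroup.subset by blast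
  have sgK: "subgroup ?K G" by (rule fh.subgroup_kernel)
  have nK: "?K \<lhd> G" by (rule fh.normal_kernel)
  have sh: "s \<in> hom (H\<lparr>carrier := L\<rparr>) G" and fs: "\<And>x. x \<in> L \<Longrightarrow> f (s x) = x"
    using ls by (auto simp: local_section_def)
  have sc: "\<And>x. x \<in> L \<Longrightarrow> s x \<in> carrier G" using sh by (auto simp: hom_def)
  have smul: "\<And>x y. x \<in> L \<Longrightarrow> y \<in> L \<Longrightarrow> s (x \<otimes>\<^bsub>H\<^esub> y) = s x \<otimes>\<^bsub>G\<^esub> s y"
    using sh by (auto simp: hom_def)
  have sgGi: "subgroup Gi G"
  proof (rule G.subgroupI)
    show "Gi \<subseteq> carrier G" using Gi by auto
    show "Gi \<noteq> {}" using Gi subgroup.one_closed[OF sgL] by auto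
    fix a assume "a \<in> Gi" then show "inv\<^bsub>G\<^esub> a \<in> Gi" using Gi subgroup.m_inv_closed[OF sgL] by auto
  next
    fix a b assume "a \<in> Gi" "b \<in> Gi" then show "a \<otimes>\<^bsub>G\<^esub> b \<in> Gi" using Gi subgroup.m_closed[OF sgL] by auto
  qed
  have fGi: "f ` Gi = L"
  proof
    show "f ` Gi \<subseteq> L" using Gi by auto
    show "L \<subseteq> f ` Gi"
    proof
      fix h assume h: "h \<in> L"
      then obtain g where "g \<in> carrier G" "f g = h" using Lc surj by (metis imageE subsetD)
      then show "h \<in> f ` Gi" using Gi h by auto
    qed
  qed
  have neq: "Gi \<noteq> carrier G"
  proof
    assume eq: "Gi = carrier G"
    have "carrier H \<subseteq> L" using surj fGi eq by auto
    then show False using ps Lc by (auto simp: proper_subgroup_def)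
  qed
  have KGi: "?K \<subset> Gi"
  proof
    show "?K \<subseteq> Gi" using Gi subgroup.one_closed[OF sgL] by (auto simp: kernel_def)
    obtain h where h: "h \<in> L" "h \<noteq> \<one>\<^bsub>H\<^esub>" using nt subgroup.one_closed[OF sgL] by blast
    then obtain g where g: "g \<in> carrier G" "f g = h" using Lc surj by (metis imageE subsetD)
    then have "g \<in> Gi" "g \<notin> ?K" using Gi h by (auto simp: kernel_def)
    then show "?K \<noteq> Gi" by blast
  qed
  define KG where "KG = G\<lparr>carrier := ?K\<rparr>"
  define \<phi> where "\<phi> = (\<lambda>h. \<lambda>k\<in>?K. s h \<otimes>\<^bsub>G\<^esub> k \<otimes>\<^bsub>G\<^esub> inv\<^bsub>G\<^esub> (s h))"
  have Kc: "?K \<subseteq> carrier G" by (simp add: kernel_def)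
  have conjK: "\<And>x k. x \<in> carrier G \<Longrightarrow> k \<in> ?K \<Longrightarrow> x \<otimes>\<^bsub>G\<^esub> k \<otimes>\<^bsub>G\<^esub> inv\<^bsub>G\<^esub> x \<in> ?K"
    by (auto simp add: kernel_def)
  have phiaut: "\<phi> h \<in> auto KG" if h: "h \<in> L" for h
  proof -
    have shc: "s h \<in> carrier G" using sc h .
    have hm: "\<phi> h \<in> hom KG KG"
    proof (rule homI)
      fix k assume "k \<in> carrier KG" then show "\<phi> h k \<in> carrier KG"
        using conjK shc by (simp add: KG_def \<phi>_def)
    next
      fix x y assume x: "x \<in> carrier KG" and y: "y \<in> carrier KG"
      have xy: "x \<in> carrier G" "y \<in> carrier G" using x y Kc by (auto simp: KG_def)
      have "x \<otimes>\<^bsub>G\<^esub> y \<in> ?K" using x y subgroup.m_closed[OF sgK] by (simp add: KG_def)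
      then show "\<phi> h (x \<otimes>\<^bsub>KG\<^esub> y) = \<phi> h x \<otimes>\<^bsub>KG\<^esub> \<phi> h y"
        using x y xy shc by (simp add: KG_def \<phi>_def G.m_assoc)
    qed
    have bij: "bij_betw (\<phi> h) ?K ?K"
    proof (rule bij_betwI[where g = "\<lambda>k. inv\<^bsub>G\<^esub> (s h) \<otimes>\<^bsub>G\<^esub> k \<otimes>\<^bsub>G\<^esub> s h"])
      show "\<phi> h \<in> ?K \<rightarrow> ?K" using conjK shc by (simp add: \<phi>_def)
      show "(\<lambda>k. inv\<^bsub>G\<^esub> (s h) \<otimes>\<^bsub>G\<^esub> k \<otimes>\<^bsub>G\<^esub> s h) \<in> ?K \<rightarrow> ?K"
        using conjK[of "inv\<^bsub>G\<^esub> (s h)"] shc by simp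
      fix k assume k: "k \<in> ?K"
      then have kc: "k \<in> carrier G" using Kc by blast
      show "inv\<^bsub>G\<^esub> (s h) \<otimes>\<^bsub>G\<^esub> \<phi> h k \<otimes>\<^bsub>G\<^esub> s h = k"
        using k kc shc by (simp add: \<phi>_def G.m_assoc)
      have "inv\<^bsub>G\<^esub> (s h) \<otimes>\<^bsub>G\<^esub> k \<otimes>\<^bsub>G\<^esub> s h \<in> ?K"
        using conjK[of "inv\<^bsub>G\<^esub> (s h)"] shc k by simp
      then show "\<phi> h (inv\<^bsub>G\<^esub> (s h) \<otimes>\<^bsub>G\<^esub> k \<otimes>\<^bsub>G\<^esub> s h) = k"
        using k kc shc by (simp add: \<phi>_def G.m_assoc)
    qed
    show ?thesis using hm bij by (simp add: auto_def Bij_def KG_def \<phi>_def)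
  qed
  have phihom: "\<phi> \<in> hom (H\<lparr>carrier := L\<rparr>) (AutoGroup KG)"
  proof (rule homI)
    fix h assume "h \<in> carrier (H\<lparr>carrier := L\<rparr>)"
    then show "\<phi> h \<in> carrier (AutoGroup KG)" using phiaut by (simp add: AutoGroup_def)
  next
    fix x y assume x: "x \<in> carrier (H\<lparr>carrier := L\<rparr>)" and y: "y \<in> carrier (H\<lparr>carrier := L\<rparr>)"
    then have xL: "x \<in> L" and yL: "y \<in> L" by auto
    have ax: "\<phi> x \<in> Bij ?K" and ay: "\<phi> y \<in> Bij ?K"
      using phiaut xL yL by (auto simp: auto_def KG_def)
    have sxc: "s x \<in> carrier G" "s y \<in> carrier G" using sc xL yL by auto
    have "\<phi> (x \<otimes>\<^bsub>H\<^esub> y) = compose ?K (\<phi> x) (\<phi> y)"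
    proof (rule ext)
      fix k show "\<phi> (x \<otimes>\<^bsub>H\<^esub> y) k = compose ?K (\<phi> x) (\<phi> y) k"
      proof (cases "k \<in> ?K")
        case True
        then have kc: "k \<in> carrier G" using Kc by blast
        have "s y \<otimes>\<^bsub>G\<^esub> k \<otimes>\<^bsub>G\<^esub> inv\<^bsub>G\<^esub> (s y) \<in> ?K" using conjK sxc True by blast
        then show ?thesis using True kc sxc xL yL
          by (simp add: \<phi>_def compose_def smul G.m_assoc G.inv_mult_group)
      next
        case False then show ?thesis by (simp add: \<phi>_def compose_def)
      qed
    qed
    then show "\<phi> (x \<otimes>\<^bsub>H\<lparr>carrier := L\<rparr>\<^esub> y) = \<phi> x \<otimes>\<^bsub>AutoGroup KG\<^esub> \<phi> y"
      using ax ay by (simp add: AutoGroup_def BijGroup_def KG_def)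
  qed
  define \<Omega> where "\<Omega> = (\<lambda>(k, h). k \<otimes>\<^bsub>G\<^esub> s h)"
  let ?S = "semidirect_prod KG (H\<lparr>carrier := L\<rparr>) \<phi>"
  have Omhom: "\<Omega> \<in> hom ?S (G\<lparr>carrier := Gi\<rparr>)"
  proof (rule homI)
    fix p assume "p \<in> carrier ?S"
    then obtain k h where p: "p = (k, h)" "k \<in> ?K" "h \<in> L" by (auto simp: semidirect_prod_def KG_def)
    moreover have "h \<in> carrier H" using p Lc by blast
    ultimately show "\<Omega> p \<in> carrier (G\<lparr>carrier := Gi\<rparr>)"
      using Gi Kc sc fs by (auto simp: \<Omega>_def kernel_def)
  next
    fix p q assume "p \<in> carrier ?S" "q \<in> carrier ?S"
    then obtain k1 h1 k2 h2 where p: "p = (k1, h1)" "k1 \<in> ?K" "h1 \<in> L"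
      and q: "q = (k2, h2)" "k2 \<in> ?K" "h2 \<in> L" by (auto simp: semidirect_prod_def KG_def)
    have c: "k1 \<in> carrier G" "k2 \<in> carrier G" "s h1 \<in> carrier G" "s h2 \<in> carrier G"
      using p q Kc sc by auto
    show "\<Omega> (p \<otimes>\<^bsub>?S\<^esub> q) = \<Omega> p \<otimes>\<^bsub>G\<lparr>carrier := Gi\<rparr>\<^esub> \<Omega> q"
      using p q c by (simp add: semidirect_prod_def \<Omega>_def \<phi>_def KG_def smul G.m_assoc)
  qed
  have Ombij: "bij_betw \<Omega> (carrier ?S) Gi"
  proof (rule bij_betwI[where g = "\<lambda>g. (g \<otimes>\<^bsub>G\<^esub> inv\<^bsub>G\<^esub> (s (f g)), f g)"])
    show "\<Omega> \<in> carrier ?S \<rightarrow> Gi" using Omhom by (auto simp: hom_def)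
    show "(\<lambda>g. (g \<otimes>\<^bsub>G\<^esub> inv\<^bsub>G\<^esub> (s (f g)), f g)) \<in> Gi \<rightarrow> carrier ?S"
    proof
      fix g assume g: "g \<in> Gi"
      then have gc: "g \<in> carrier G" "f g \<in> L" using Gi by auto
      then have "s (f g) \<in> carrier G" using sc by blast
      then show "(g \<otimes>\<^bsub>G\<^esub> inv\<^bsub>G\<^esub> (s (f g)), f g) \<in> carrier ?S"
        using gc fs by (simp add: semidirect_prod_def KG_def kernel_def)
    qed
  next
    fix p assume "p \<in> carrier ?S"
    then obtain k h where p: "p = (k, h)" "k \<in> ?K" "h \<in> L" by (auto simp: semidirect_prod_def KG_def)
    then have c: "k \<in> carrier G" "s h \<in> carrier G" using Kc sc by auto
    have "f (k \<otimes>\<^bsub>G\<^esub> s h) = h" using p c fs Lc by (auto simp: kernel_def)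
    then show "(\<Omega> p \<otimes>\<^bsub>G\<^esub> inv\<^bsub>G\<^esub> (s (f (\<Omega> p))), f (\<Omega> p)) = p"
      using p c by (simp add: \<Omega>_def G.m_assoc)
  next
    fix g assume g: "g \<in> Gi"
    then have gc: "g \<in> carrier G" "f g \<in> L" using Gi by auto
    then have "s (f g) \<in> carrier G" using sc by blast
    then show "\<Omega> (g \<otimes>\<^bsub>G\<^esub> inv\<^bsub>G\<^esub> (s (f g)), f g) = g"
      using gc by (simp add: \<Omega>_def G.m_assoc)
  qed
  have fO: "\<forall>p \<in> ?K \<times> L. f (\<Omega> p) = snd p"
  proof
    fix p assume "p \<in> ?K \<times> L"
    then obtain k h where p: "p = (k, h)" "k \<in> ?K" "h \<in> L" by auto
    then have c: "k \<in> carrier G" "s h \<in> carrier G" using Kc sc by auto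
    show "f (\<Omega> p) = snd p" using p c fs Lc by (auto simp: kernel_def \<Omega>_def)
  qed
  have "\<Omega> \<in> iso ?S (G\<lparr>carrier := Gi\<rparr>)" using Omhom Ombij by (simp add: iso_def)
  then show ?thesis using phihom fO sgGi neq KGi fGi
    by (auto simp: proper_subgroup_def KG_def)
qed



lemma piece_to_sec:
  assumes G: "group G" and H: "group H" and f: "f \<in> hom G H" and surj: "f ` carrier G = carrier H"
    and ps: "proper_subgroup Gi G" and Ksub: "kernel G H f \<subset> Gi"
    and phi: "\<phi> \<in> hom (H\<lparr>carrier := f ` Gi\<rparr>) (AutoGroup (G\<lparr>carrier := kernel G H f\<rparr>))"
    and Om: "\<Omega> \<in> iso (semidirect_prod (G\<lparr>carrier := kernel G H f\<rparr>) (H\<lparr>carrier := f ` Gi\<rparr>) \<phi>) (G\<lparr>carrier := Gi\<rparr>)"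
    and fO: "\<forall>p \<in> kernel G H f \<times> f ` Gi. f (\<Omega> p) = snd p"
  shows "proper_subgroup (f ` Gi) H \<and> has_local_section G H f (f ` Gi)"
proof -
  interpret G: group G by (rule G)
  interpret H: group H by (rule H)
  interpret fh: group_hom G H f using f G H by (simp add: group_hom_def group_hom_axioms_def)
  let ?K = "kernel G H f"
  have sg: "subgroup Gi G" using ps by (simp add: proper_subgroup_def)
  have sgK: "subgroup ?K G" by (rule fh.subgroup_kernel)
  have sub: "subgroup (f ` Gi) H" using fh.subgroup_img_is_subgroup[OF sg] .
  have ne: "f ` Gi \<noteq> carrier H"
  proof
    assume eq: "f ` Gi = carrier H"
    have "carrier G \<subseteq> Gi"
    proof
      fix g assume g: "g \<in> carrier G"
      then have "f g \<in> f ` Gi" using eq by auto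
      then obtain g' where g': "g' \<in> Gi" "f g = f g'" by auto
      have g'c: "g' \<in> carrier G" using g' sg subgroup.subset by blast
      have "g \<otimes>\<^bsub>G\<^esub> inv\<^bsub>G\<^esub> g' \<in> ?K"
        using g g'c g' by (simp add: kernel_def)
      then have "g \<otimes>\<^bsub>G\<^esub> inv\<^bsub>G\<^esub> g' \<in> Gi" using Ksub by blast
      then have "(g \<otimes>\<^bsub>G\<^esub> inv\<^bsub>G\<^esub> g') \<otimes>\<^bsub>G\<^esub> g' \<in> Gi" using subgroup.m_closed[OF sg _ g'(1)] by blast
      then show "g \<in> Gi" using g g'c by (simp add: G.m_assoc)
    qed
    then show False using ps sg subgroup.subset unfolding proper_subgroup_def by blast
  qed
  define s where "s = (\<lambda>h. \<Omega> (\<one>\<^bsub>G\<^esub>, h))"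
  have Omh: "\<Omega> \<in> hom (semidirect_prod (G\<lparr>carrier := ?K\<rparr>) (H\<lparr>carrier := f ` Gi\<rparr>) \<phi>) (G\<lparr>carrier := Gi\<rparr>)"
    using Om by (simp add: iso_def)
  have one_K: "\<one>\<^bsub>G\<^esub> \<in> ?K" by (simp add: kernel_def)
  have phi1: "\<phi> h \<one>\<^bsub>G\<^esub> = \<one>\<^bsub>G\<^esub>" if h: "h \<in> f ` Gi" for h
  proof -
    have "\<phi> h \<in> carrier (AutoGroup (G\<lparr>carrier := ?K\<rparr>))"
      using phi h by (auto simp: hom_def)
    then have "\<phi> h \<in> hom (G\<lparr>carrier := ?K\<rparr>) (G\<lparr>carrier := ?K\<rparr>)"
      by (simp add: AutoGroup_def auto_def)
    moreover have "group (G\<lparr>carrier := ?K\<rparr>)" using sgK by (rule subgroup.subgroup_is_group) (rule G)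
    ultimately have "\<phi> h (\<one>\<^bsub>G\<lparr>carrier := ?K\<rparr>\<^esub>) = \<one>\<^bsub>G\<lparr>carrier := ?K\<rparr>\<^esub>"
      using hom_one by blast
    then show ?thesis by simp
  qed
  have "s \<in> hom (H\<lparr>carrier := f ` Gi\<rparr>) G"
  proof (rule homI)
    fix h assume h: "h \<in> carrier (H\<lparr>carrier := f ` Gi\<rparr>)"
    then have "(\<one>\<^bsub>G\<^esub>, h) \<in> carrier (semidirect_prod (G\<lparr>carrier := ?K\<rparr>) (H\<lparr>carrier := f ` Gi\<rparr>) \<phi>)"
      using one_K by (simp add: semidirect_prod_def)
    then have "s h \<in> Gi" using Omh unfolding s_def by (auto simp: hom_def)
    then show "s h \<in> carrier G" using sg subgroup.subset by blast
  next
    fix x y assume x: "x \<in> carrier (H\<lparr>carrier := f ` Gi\<rparr>)" and y: "y \<in> carrier (H\<lparr>carrier := f ` Gi\<rparr>)"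
    let ?S = "semidirect_prod (G\<lparr>carrier := ?K\<rparr>) (H\<lparr>carrier := f ` Gi\<rparr>) \<phi>"
    have cx: "(\<one>\<^bsub>G\<^esub>, x) \<in> carrier ?S" and cy: "(\<one>\<^bsub>G\<^esub>, y) \<in> carrier ?S"
      using x y one_K by (simp_all add: semidirect_prod_def)
    have "(\<one>\<^bsub>G\<^esub>, x) \<otimes>\<^bsub>?S\<^esub> (\<one>\<^bsub>G\<^esub>, y) = (\<one>\<^bsub>G\<^esub>, x \<otimes>\<^bsub>H\<^esub> y)"
      using phi1 x by (simp add: semidirect_prod_def)
    then have "\<Omega> (\<one>\<^bsub>G\<^esub>, x \<otimes>\<^bsub>H\<^esub> y) = \<Omega> (\<one>\<^bsub>G\<^esub>, x) \<otimes>\<^bsub>G\<^esub> \<Omega> (\<one>\<^bsub>G\<^esub>, y)"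
      using hom_mult[OF Omh cx cy] by simp
    then show "s (x \<otimes>\<^bsub>H\<lparr>carrier := f ` Gi\<rparr>\<^esub> y) = s x \<otimes>\<^bsub>G\<^esub> s y" by (simp add: s_def)
  qed
  moreover have "\<forall>x\<in>f ` Gi. f (s x) = x" using fO one_K by (simp add: s_def)
  ultimately have "has_local_section G H f (f ` Gi)"
    by (auto simp: has_local_section_def local_section_def)
  then show ?thesis using sub ne by (simp add: proper_subgroup_def)
qed



lemma sec_le_cov:
  fixes G :: "('a, 'c) monoid_scheme" and H :: "('b, 'd) monoid_scheme" and f :: "'a \<Rightarrow> 'b"
  assumes G: "group G" and H: "group H" and f: "f \<in> hom G H" and surj: "f ` carrier G = carrier H"
  shows "sec G H f \<le> cov_number G H f"
  unfolding sec_def cov_number_def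
proof (rule Inf_mono)
  fix b assume "b \<in> {enat m | m. m > 0 \<and>
           (\<exists>Gs :: nat \<Rightarrow> 'a set.
              (\<forall>i<m. proper_subgroup (Gs i) G \<and> kernel G H f \<subset> Gs i \<and>
                 (\<exists>\<phi> \<Omega>. \<phi> \<in> hom (H\<lparr>carrier := f ` Gs i\<rparr>) (AutoGroup (G\<lparr>carrier := kernel G H f\<rparr>)) \<and>
                    \<Omega> \<in> iso (semidirect_prod (G\<lparr>carrier := kernel G H f\<rparr>) (H\<lparr>carrier := f ` Gs i\<rparr>) \<phi>)
                            (G\<lparr>carrier := Gs i\<rparr>) \<and>
                    (\<forall>p \<in> kernel G H f \<times> f ` Gs i. f (\<Omega> p) = snd p))) \<and>
              carrier G = (\<Union>i<m. Gs i))}"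
  then obtain m Gs where b: "b = enat m" "m > 0" and cov: "carrier G = (\<Union>i<m. Gs i)"
    and P: "\<And>i. i < m \<Longrightarrow> proper_subgroup (Gs i) G \<and> kernel G H f \<subset> Gs i \<and>
                 (\<exists>\<phi> \<Omega>. \<phi> \<in> hom (H\<lparr>carrier := f ` Gs i\<rparr>) (AutoGroup (G\<lparr>carrier := kernel G H f\<rparr>)) \<and>
                    \<Omega> \<in> iso (semidirect_prod (G\<lparr>carrier := kernel G H f\<rparr>) (H\<lparr>carrier := f ` Gs i\<rparr>) \<phi>)
                            (G\<lparr>carrier := Gs i\<rparr>) \<and>
                    (\<forall>p \<in> kernel G H f \<times> f ` Gs i. f (\<Omega> p) = snd p))"
    by blast
  have Q: "proper_subgroup (f ` Gs i) H \<and> has_local_section G H f (f ` Gs i)" if i: "i < m" for i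
    using P[OF i] piece_to_sec[OF G H f surj] by blast
  have C: "carrier H = (\<Union>i<m. f ` Gs i)" using surj cov by (simp add: image_UN)
  have "enat m \<in> {enat m | m. m > 0 \<and>
           (\<exists>Hs :: nat \<Rightarrow> 'b set.
              (\<forall>i<m. proper_subgroup (Hs i) H \<and> has_local_section G H f (Hs i)) \<and>
              carrier H = (\<Union>i<m. Hs i))}"
    unfolding mem_Collect_eq
    apply (rule exI[of _ m])
    apply (intro conjI refl b(2))
    apply (rule exI[of _ "\<lambda>i. f ` Gs i"])
    using Q C by blast
  then show "\<exists>a\<in>{enat m | m. m > 0 \<and>
           (\<exists>Hs :: nat \<Rightarrow> 'b set.
              (\<forall>i<m. proper_subgroup (Hs i) H \<and> has_local_section G H f (Hs i)) \<and>
              carrier H = (\<Union>i<m. Hs i))}. a \<le> b" using b by blast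
qed

lemma cov_le_sec:
  fixes G :: "('a, 'c) monoid_scheme" and H :: "('b, 'd) monoid_scheme" and f :: "'a \<Rightarrow> 'b"
  assumes G: "group G" and H: "group H" and f: "f \<in> hom G H" and surj: "f ` carrier G = carrier H"
  shows "cov_number G H f \<le> sec G H f"
  unfolding sec_def cov_number_def
proof (rule Inf_mono)
  fix b assume "b \<in> {enat m | m. m > 0 \<and>
           (\<exists>Hs :: nat \<Rightarrow> 'b set.
              (\<forall>i<m. proper_subgroup (Hs i) H \<and> has_local_section G H f (Hs i)) \<and>
              carrier H = (\<Union>i<m. Hs i))}"
  then obtain m Hs where b: "b = enat m" "m > 0" and cov: "carrier H = (\<Union>i<m. Hs i)"
    and P: "\<And>i. i < m \<Longrightarrow> proper_subgroup (Hs i) H \<and> has_local_section G H f (Hs i)"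
    by blast
  have "\<exists>j<m. Hs j \<noteq> {\<one>\<^bsub>H\<^esub>}"
  proof (rule ccontr)
    assume na: "\<not> ?thesis"
    then have "carrier H = {\<one>\<^bsub>H\<^esub>}" using cov b(2) by auto
    moreover have "Hs 0 = {\<one>\<^bsub>H\<^esub>}" using na b(2) by auto
    ultimately show False using P[OF b(2)] by (simp add: proper_subgroup_def)
  qed
  then obtain j where j: "j < m" "Hs j \<noteq> {\<one>\<^bsub>H\<^esub>}" by blast
  define Hs' where "Hs' = (\<lambda>i. if Hs i = {\<one>\<^bsub>H\<^esub>} then Hs j else Hs i)"
  have P': "proper_subgroup (Hs' i) H \<and> has_local_section G H f (Hs' i) \<and> Hs' i \<noteq> {\<one>\<^bsub>H\<^esub>}"
    if "i < m" for i using P[OF that] P[OF j(1)] j by (simp add: Hs'_def)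
  have cov': "carrier H = (\<Union>i<m. Hs' i)"
  proof
    show "carrier H \<subseteq> (\<Union>i<m. Hs' i)"
    proof
      fix x assume "x \<in> carrier H"
      then obtain i where i: "i < m" "x \<in> Hs i" using cov by auto
      show "x \<in> (\<Union>i<m. Hs' i)"
      proof (cases "Hs i = {\<one>\<^bsub>H\<^esub>}")
        case True
        then have "x = \<one>\<^bsub>H\<^esub>" using i by auto
        then have "x \<in> Hs j" using P[OF j(1)] subgroup.one_closed by (auto simp: proper_subgroup_def)
        then show ?thesis using True j i by (auto simp: Hs'_def)
      next
        case False then show ?thesis using i by (auto simp: Hs'_def)
      qed
    qed
    show "(\<Union>i<m. Hs' i) \<subseteq> carrier H" using cov j by (auto simp: Hs'_def)
  qed
  define Gs where "Gs = (\<lambda>i. {g \<in> carrier G. f g \<in> Hs' i})"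
  have Q: "proper_subgroup (Gs i) G \<and> kernel G H f \<subset> Gs i \<and>
                 (\<exists>\<phi> \<Omega>. \<phi> \<in> hom (H\<lparr>carrier := f ` Gs i\<rparr>) (AutoGroup (G\<lparr>carrier := kernel G H f\<rparr>)) \<and>
                    \<Omega> \<in> iso (semidirect_prod (G\<lparr>carrier := kernel G H f\<rparr>) (H\<lparr>carrier := f ` Gs i\<rparr>) \<phi>)
                            (G\<lparr>carrier := Gs i\<rparr>) \<and>
                    (\<forall>p \<in> kernel G H f \<times> f ` Gs i. f (\<Omega> p) = snd p))" if i: "i < m" for i
  proof -
    obtain s where "local_section G H f (Hs' i) s" using P'[OF i] by (auto simp: has_local_section_def)
    then show ?thesis using piece_to_cov[OF G H f surj _ _ _ Gs_def[THEN fun_cong[of _ _ i]]] P'[OF i]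
      by (simp add: Gs_def)
  qed
  have C: "carrier G = (\<Union>i<m. Gs i)"
    using cov' f by (auto simp: Gs_def hom_def)
  have "enat m \<in> {enat m | m. m > 0 \<and>
           (\<exists>Gs :: nat \<Rightarrow> 'a set.
              (\<forall>i<m. proper_subgroup (Gs i) G \<and> kernel G H f \<subset> Gs i \<and>
                 (\<exists>\<phi> \<Omega>. \<phi> \<in> hom (H\<lparr>carrier := f ` Gs i\<rparr>) (AutoGroup (G\<lparr>carrier := kernel G H f\<rparr>)) \<and>
                    \<Omega> \<in> iso (semidirect_prod (G\<lparr>carrier := kernel G H f\<rparr>) (H\<lparr>carrier := f ` Gs i\<rparr>) \<phi>)
                            (G\<lparr>carrier := Gs i\<rparr>) \<and>
                    (\<forall>p \<in> kernel G H f \<times> f ` Gs i. f (\<Omega> p) = snd p))) \<and>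
              carrier G = (\<Union>i<m. Gs i))}"
    unfolding mem_Collect_eq
    apply (rule exI[of _ m])
    apply (intro conjI refl b(2))
    apply (rule exI[of _ Gs])
    using Q C by blast
  then show "\<exists>a\<in>{enat m | m. m > 0 \<and>
           (\<exists>Gs :: nat \<Rightarrow> 'a set.
              (\<forall>i<m. proper_subgroup (Gs i) G \<and> kernel G H f \<subset> Gs i \<and>
                 (\<exists>\<phi> \<Omega>. \<phi> \<in> hom (H\<lparr>carrier := f ` Gs i\<rparr>) (AutoGroup (G\<lparr>carrier := kernel G H f\<rparr>)) \<and>
                    \<Omega> \<in> iso (semidirect_prod (G\<lparr>carrier := kernel G H f\<rparr>) (H\<lparr>carrier := f ` Gs i\<rparr>) \<phi>)
                            (G\<lparr>carrier := Gs i\<rparr>) \<and>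
                    (\<forall>p \<in> kernel G H f \<times> f ` Gs i. f (\<Omega> p) = snd p))) \<and>
              carrier G = (\<Union>i<m. Gs i))}. a \<le> b" using b by blast
qed



lemma sec_iso_le:
  fixes G :: "('a, 'c) monoid_scheme" and HA :: "('b, 'd) monoid_scheme" and HB :: "('e, 'g) monoid_scheme"
    and fA :: "'a \<Rightarrow> 'b" and fB :: "'a \<Rightarrow> 'e"
  assumes HA: "group HA" and HB: "group HB" and th: "\<theta> \<in> iso HA HB"
    and eq: "\<And>g. g \<in> carrier G \<Longrightarrow> fB g = \<theta> (fA g)"
  shows "sec G HB fB \<le> sec G HA fA"
  unfolding sec_def
proof (rule Inf_mono)
  fix b assume "b \<in> {enat m | m. m > 0 \<and>
           (\<exists>Hs :: nat \<Rightarrow> 'b set.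
              (\<forall>i<m. proper_subgroup (Hs i) HA \<and> has_local_section G HA fA (Hs i)) \<and>
              carrier HA = (\<Union>i<m. Hs i))}"
  then obtain m Hs where b: "b = enat m" "m > 0" and cov: "carrier HA = (\<Union>i<m. Hs i)"
    and P: "\<And>i. i < m \<Longrightarrow> proper_subgroup (Hs i) HA \<and> has_local_section G HA fA (Hs i)"
    by blast
  interpret HA: group HA by (rule HA)
  interpret HB: group HB by (rule HB)
  have thh: "\<theta> \<in> hom HA HB" and thb: "bij_betw \<theta> (carrier HA) (carrier HB)" using th by (auto simp: iso_def)
  interpret th: group_hom HA HB \<theta> using thh HA HB by (simp add: group_hom_def group_hom_axioms_def)
  define \<psi> where "\<psi> = inv_into (carrier HA) \<theta>"
  have psi: "\<psi> \<in> iso HB HA" unfolding \<psi>_def by (rule HA.iso_set_sym[OF th])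
  have psih: "\<psi> \<in> hom HB HA" using psi by (simp add: iso_def)
  have inj: "inj_on \<theta> (carrier HA)" and img: "\<theta> ` carrier HA = carrier HB" using thb by (auto simp: bij_betw_def)
  have psith: "\<And>x. x \<in> carrier HA \<Longrightarrow> \<psi> (\<theta> x) = x" unfolding \<psi>_def using inj by (simp add: inv_into_f_f)
  have Q: "proper_subgroup (\<theta> ` Hs i) HB \<and> has_local_section G HB fB (\<theta> ` Hs i)" if i: "i < m" for i
  proof -
    have sg: "subgroup (Hs i) HA" and ne: "Hs i \<noteq> carrier HA" using P[OF i] by (auto simp: proper_subgroup_def)
    have Lc: "Hs i \<subseteq> carrier HA" using sg subgroup.subset by blast
    have sg2: "subgroup (\<theta> ` Hs i) HB" by (rule th.subgroup_img_is_subgroup[OF sg])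
    have ne2: "\<theta> ` Hs i \<noteq> carrier HB" using inj_on_image_eq_iff[OF inj Lc subset_refl] ne img by simp
    obtain s where s: "s \<in> hom (HA\<lparr>carrier := Hs i\<rparr>) G" "\<And>x. x \<in> Hs i \<Longrightarrow> fA (s x) = x"
      using P[OF i] by (auto simp: has_local_section_def local_section_def)
    have psiL: "\<psi> y \<in> Hs i" if "y \<in> \<theta> ` Hs i" for y using that psith Lc by auto
    have "(\<lambda>y. s (\<psi> y)) \<in> hom (HB\<lparr>carrier := \<theta> ` Hs i\<rparr>) G"
    proof (rule homI)
      fix y assume "y \<in> carrier (HB\<lparr>carrier := \<theta> ` Hs i\<rparr>)"
      then show "s (\<psi> y) \<in> carrier G" using psiL s(1) by (auto simp: hom_def)
    next
      fix x y assume x: "x \<in> carrier (HB\<lparr>carrier := \<theta> ` Hs i\<rparr>)" and y: "y \<in> carrier (HB\<lparr>carrier := \<theta> ` Hs i\<rparr>)"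
      have xy: "x \<in> carrier HB" "y \<in> carrier HB" using x y Lc img by auto
      have "\<psi> (x \<otimes>\<^bsub>HB\<^esub> y) = \<psi> x \<otimes>\<^bsub>HA\<^esub> \<psi> y" using hom_mult[OF psih xy] .
      moreover have "s (\<psi> x \<otimes>\<^bsub>HA\<^esub> \<psi> y) = s (\<psi> x) \<otimes>\<^bsub>G\<^esub> s (\<psi> y)"
        using hom_mult[OF s(1), of "\<psi> x" "\<psi> y"] psiL x y by simp
      ultimately show "s (\<psi> (x \<otimes>\<^bsub>HB\<lparr>carrier := \<theta> ` Hs i\<rparr>\<^esub> y)) = s (\<psi> x) \<otimes>\<^bsub>G\<^esub> s (\<psi> y)" by simp
    qed
    moreover have "\<forall>y\<in>\<theta> ` Hs i. fB (s (\<psi> y)) = y"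
    proof
      fix y assume y: "y \<in> \<theta> ` Hs i"
      then obtain x where x: "x \<in> Hs i" "y = \<theta> x" by auto
      have "s (\<psi> y) \<in> carrier G" using psiL[OF y] s(1) by (auto simp: hom_def)
      then show "fB (s (\<psi> y)) = y" using eq x s(2) psith Lc by auto
    qed
    ultimately show ?thesis using sg2 ne2
      by (auto simp: proper_subgroup_def has_local_section_def local_section_def)
  qed
  have C: "carrier HB = (\<Union>i<m. \<theta> ` Hs i)" using img cov by (simp add: image_UN)
  have "enat m \<in> {enat m | m. m > 0 \<and>
           (\<exists>Hs :: nat \<Rightarrow> 'e set.
              (\<forall>i<m. proper_subgroup (Hs i) HB \<and> has_local_section G HB fB (Hs i)) \<and>
              carrier HB = (\<Union>i<m. Hs i))}"
    unfolding mem_Collect_eq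
    apply (rule exI[of _ m])
    apply (intro conjI refl b(2))
    apply (rule exI[of _ "\<lambda>i. \<theta> ` Hs i"])
    using Q C by blast
  then show "\<exists>a\<in>{enat m | m. m > 0 \<and>
           (\<exists>Hs :: nat \<Rightarrow> 'e set.
              (\<forall>i<m. proper_subgroup (Hs i) HB \<and> has_local_section G HB fB (Hs i)) \<and>
              carrier HB = (\<Union>i<m. Hs i))}. a \<le> b" using b by blast
qed

theorem theorem2p11:
  fixes G :: "('a, 'c) monoid_scheme" and H :: "('b, 'd) monoid_scheme" and f :: "'a \<Rightarrow> 'b"
  assumes "group G" and "group H" and "f \<in> hom G H" and "f ` carrier G = carrier H"
  defines "q \<equiv> (\<lambda>g. g <#\<^bsub>G\<^esub> kernel G H f)"
  shows "(cov_number G H f \<le> sec G H f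
          \<and> (\<not> has_global_section G H f \<longrightarrow> sec G H f = cov_number G H f))
         \<and> sec G H f = sec G (G Mod kernel G H f) q
         \<and> (\<not> has_global_section G H f \<longrightarrow> sec G H f = cov_number G (G Mod kernel G H f) q)"
proof -
  note G = assms(1) and H = assms(2) and f = assms(3) and surj = assms(4)
  interpret G: group G by (rule G)
  interpret H: group H by (rule H)
  interpret fh: group_hom G H f using f G H by (simp add: group_hom_def group_hom_axioms_def)
  let ?K = "kernel G H f"
  have nK: "?K \<lhd> G" by (rule fh.normal_kernel)
  have qeq: "q g = ?K #>\<^bsub>G\<^esub> g" if "g \<in> carrier G" for g
    using normal.coset_eq[OF nK] that by (simp add: q_def)
  have GM: "group (G Mod ?K)" by (rule normal.factorgroup_is_group[OF nK])
  have qh: "q \<in> hom G (G Mod ?K)"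
    using G.hom_eq[OF normal.r_coset_hom_Mod[OF nK]] qeq by blast
  have qsurj: "q ` carrier G = carrier (G Mod ?K)"
    using qeq by (force simp: FactGroup_def RCOSETS_def)
  define \<theta> where "\<theta> = (\<lambda>Y. the_elem (f ` Y))"
  have th: "\<theta> \<in> iso (G Mod ?K) H" unfolding \<theta>_def by (rule fh.FactGroup_iso_set[OF surj])
  have fth: "f g = \<theta> (q g)" if g: "g \<in> carrier G" for g
  proof -
    have "f ` (?K #>\<^bsub>G\<^esub> g) = {f g}" using g by (auto simp: kernel_def r_coset_def intro!: imageI)
    then show ?thesis using qeq[OF g] by (simp add: \<theta>_def)
  qed
  define \<psi> where "\<psi> = inv_into (carrier (G Mod ?K)) \<theta>"
  have psi: "\<psi> \<in> iso H (G Mod ?K)" unfolding \<psi>_def by (rule group.iso_set_sym[OF GM th])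
  have qpsi: "q g = \<psi> (f g)" if g: "g \<in> carrier G" for g
  proof -
    have "inj_on \<theta> (carrier (G Mod ?K))" using th by (auto simp: iso_def bij_betw_def)
    moreover have "q g \<in> carrier (G Mod ?K)" using qsurj g by blast
    ultimately show ?thesis using fth[OF g] by (simp add: \<psi>_def inv_into_f_f)
  qed
  have A1: "sec G H f = cov_number G H f"
    using sec_le_cov[OF G H f surj] cov_le_sec[OF G H f surj] by simp
  have A2: "sec G (G Mod ?K) q = cov_number G (G Mod ?K) q"
    using sec_le_cov[OF G GM qh qsurj] cov_le_sec[OF G GM qh qsurj] by simp
  have B: "sec G H f = sec G (G Mod ?K) q"
    using sec_iso_le[where G=G and fA=q and fB=f, OF GM H th fth] sec_iso_le[where G=G and fA=f and fB=q, OF H GM psi qpsi] by simp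
  show ?thesis using A1 A2 B by simp
qed

end
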